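(* Let $i\in\{1,\dots,N\}$, $\mathbb I\subset\{i-2K,\dots,i+2K\}$ and $k,l\notin\mathbb I$. Then $|G^{(\mathbb I)}_{kl}|\le 8K^2\Gamma^2\gamma$.
   Context: $K\ge1$ is an integer. $H$ is an $N\times N$ real symmetric matrix, $z\in\mathbb C^+$, $G=(H-z)^{-1}$. For $\mathbb T\subset\{1,\dots,N\}$, $H^{(\mathbb T)}$ has entries $H_{ij}\mathbf 1_{i\notin\mathbb T}\mathbf 1_{j\notin\mathbb T}$ and $G^{(\mathbb T)}=(H^{(\mathbb T)}-z)^{-1}$; $A_{\mathbb S,\mathbb U}$ denotes a submatrix. Control parameters: $\Gamma=1\vee\max_{i,j}|G_{ij}|$ and $\gamma=1\vee\sup_i\sup_{\mathbb I,\mathbb J}\|(G^{(\mathbb J)}_{\mathbb I,\mathbb I})^{-1}\|$, where the inner supremum is over all disjoint $\mathbb I,\mathbb J\subset\{i-2K,\dots,i+2K\}$ and $\|\cdot\|$ is the operator norm. *)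

theory Defs
  imports "HOL-Analysis.Analysis"
begin

text \<open>Matrices are functions nat => nat => complex; only the entries indexed by a
finite index set S are meaningful. The N x N matrices of the paper use S = {1..N}.\<close>

definition minv :: "nat set \<Rightarrow> (nat \<Rightarrow> nat \<Rightarrow> complex) \<Rightarrow> (nat \<Rightarrow> nat \<Rightarrow> complex)" where
  "minv S A = (THE B. (\<forall>i\<in>S. \<forall>j\<in>S. (\<Sum>k\<in>S. A i k * B k j) = (if i = j then 1 else 0))
                    \<and> (\<forall>i j. i \<notin> S \<or> j \<notin> S \<longrightarrow> B i j = 0))"

definition opnorm :: "nat set \<Rightarrow> (nat \<Rightarrow> nat \<Rightarrow> complex) \<Rightarrow> real" where
  "opnorm S A = Sup (insert 0 {sqrt (\<Sum>i\<in>S. (cmod (\<Sum>j\<in>S. A i j * v j))\<^sup>2) | v.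
                     (\<Sum>j\<in>S. (cmod (v j))\<^sup>2) = 1})"

definition minor :: "(nat \<Rightarrow> nat \<Rightarrow> real) \<Rightarrow> nat set \<Rightarrow> (nat \<Rightarrow> nat \<Rightarrow> real)" where
  "minor H T = (\<lambda>i j. if i \<notin> T \<and> j \<notin> T then H i j else 0)"

definition resolv :: "nat \<Rightarrow> (nat \<Rightarrow> nat \<Rightarrow> real) \<Rightarrow> complex \<Rightarrow> nat set \<Rightarrow> (nat \<Rightarrow> nat \<Rightarrow> complex)" where
  "resolv N H z T = minv {1..N} (\<lambda>i j. complex_of_real (minor H T i j) - (if i = j then z else 0))"

definition window :: "nat \<Rightarrow> nat \<Rightarrow> nat \<Rightarrow> nat set" where
  "window N K i = {j \<in> {1..N}. i \<le> j + 2 * K \<and> j \<le> i + 2 * K}"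

definition Gamma_ctrl :: "nat \<Rightarrow> (nat \<Rightarrow> nat \<Rightarrow> real) \<Rightarrow> complex \<Rightarrow> real" where
  "Gamma_ctrl N H z = max 1 (Max {cmod (resolv N H z {} i j) | i j. i \<in> {1..N} \<and> j \<in> {1..N}})"

definition gamma_ctrl :: "nat \<Rightarrow> nat \<Rightarrow> (nat \<Rightarrow> nat \<Rightarrow> real) \<Rightarrow> complex \<Rightarrow> real" where
  "gamma_ctrl N K H z = max 1 (Sup {opnorm I (minv I (resolv N H z J)) | i I J.
       i \<in> {1..N} \<and> I \<subseteq> window N K i \<and> J \<subseteq> window N K i \<and> I \<inter> J = {}})"

end

theory Submission imports Defs "Jordan_Normal_Form.Determinant" begin

lemma sum_delta_l:
  assumes "finite S" "a \<in> S"
  shows "(\<Sum>k\<in>S. (if a = k then 1 else 0) * (f k :: complex)) = f a"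
proof -
  have "\<And>k. (if a = k then 1 else 0) * f k = (if a = k then f k else 0)" by simp
  then show ?thesis using assms by (simp add: sum.delta sum.delta')
qed

lemma sum_delta_r:
  assumes "finite S" "b \<in> S"
  shows "(\<Sum>k\<in>S. (f k :: complex) * (if k = b then 1 else 0)) = f b"
proof -
  have "\<And>k. f k * (if k = b then 1 else 0) = (if k = b then f k else 0)" by simp
  then show ?thesis using assms by (simp add: sum.delta sum.delta')
qed

lemma sum_assoc3:
  "(\<Sum>k\<in>S. (\<Sum>m\<in>T. X m * (Y m k :: complex)) * Z k) = (\<Sum>m\<in>T. X m * (\<Sum>k\<in>S. Y m k * Z k))"
  by (simp add: sum_distrib_left sum_distrib_right mult.assoc sum.swap[of _ S])


lemma left_inv_apply:
  assumes fin: "finite S"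
    and GA: "\<forall>a\<in>S. \<forall>m\<in>S. (\<Sum>k\<in>S. G a k * A k m) = (if a = m then 1 else (0::complex))"
    and AB: "\<forall>k\<in>S. \<forall>b\<in>S. (\<Sum>m\<in>S. A k m * B m b) = (if k = b then 1 else 0)"
    and a: "a \<in> S" and b: "b \<in> S"
  shows "G a b = B a b"
proof -
  have "G a b = (\<Sum>k\<in>S. G a k * (if k = b then 1 else 0))" using sum_delta_r[OF fin b] by simp
  also have "\<dots> = (\<Sum>k\<in>S. G a k * (\<Sum>m\<in>S. A k m * B m b))" using AB b by (intro sum.cong) auto
  also have "\<dots> = (\<Sum>m\<in>S. (\<Sum>k\<in>S. G a k * A k m) * B m b)" by (rule sum_assoc3[symmetric])
  also have "\<dots> = (\<Sum>m\<in>S. (if a = m then 1 else 0) * B m b)" using GA a by (intro sum.cong) auto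
  also have "\<dots> = B a b" using sum_delta_l[OF fin a] by simp
  finally show ?thesis .
qed

lemma minv_eq:
  assumes fin: "finite S"
    and AB: "\<forall>a\<in>S. \<forall>b\<in>S. (\<Sum>k\<in>S. A a k * B k b) = (if a = b then 1 else 0)"
    and BA: "\<forall>a\<in>S. \<forall>b\<in>S. (\<Sum>k\<in>S. B a k * A k b) = (if a = b then 1 else 0)"
    and a: "a \<in> S" and b: "b \<in> S"
  shows "minv S A a b = B a b"
proof -
  define B0 where "B0 = (\<lambda>i j. if i \<in> S \<and> j \<in> S then B i j else 0)"
  have P0: "(\<forall>i\<in>S. \<forall>j\<in>S. (\<Sum>k\<in>S. A i k * B0 k j) = (if i = j then 1 else 0))
                    \<and> (\<forall>i j. i \<notin> S \<or> j \<notin> S \<longrightarrow> B0 i j = 0)"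
  proof (intro conjI ballI allI impI)
    fix i j assume ij: "i \<in> S" "j \<in> S"
    have "(\<Sum>k\<in>S. A i k * B0 k j) = (\<Sum>k\<in>S. A i k * B k j)"
      using ij by (intro sum.cong) (auto simp: B0_def)
    then show "(\<Sum>k\<in>S. A i k * B0 k j) = (if i = j then 1 else 0)" using AB ij by simp
  next
    fix i j :: nat assume "i \<notin> S \<or> j \<notin> S" then show "B0 i j = 0" by (auto simp: B0_def)
  qed
  have U: "B' = B0" if P: "(\<forall>i\<in>S. \<forall>j\<in>S. (\<Sum>k\<in>S. A i k * B' k j) = (if i = j then 1 else 0))
                    \<and> (\<forall>i j. i \<notin> S \<or> j \<notin> S \<longrightarrow> B' i j = 0)" for B'
  proof (intro ext)
    fix i j
    show "B' i j = B0 i j"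
    proof (cases "i \<in> S \<and> j \<in> S")
      case True
      then have "B i j = B' i j" using left_inv_apply[OF fin BA, of B' i j] P by auto
      then show ?thesis using True by (simp add: B0_def)
    next
      case False then show ?thesis using P by (auto simp: B0_def)
    qed
  qed
  have "minv S A = B0" unfolding minv_def
  proof (rule the1_equality)
    show "\<exists>!B. (\<forall>i\<in>S. \<forall>j\<in>S. (\<Sum>k\<in>S. A i k * B k j) = (if i = j then 1 else 0))
                    \<and> (\<forall>i j. i \<notin> S \<or> j \<notin> S \<longrightarrow> B i j = 0)"
      by (rule ex1I[of _ B0], rule P0, rule U, assumption)
  qed (rule P0)
  then show ?thesis using a b by (simp add: B0_def)
qed

lemma inv_exists:
  fixes S :: "nat set"
  assumes fin: "finite S"
    and inj: "\<forall>v. (\<forall>i\<in>S. (\<Sum>j\<in>S. A i j * v j) = (0::complex)) \<longrightarrow> (\<forall>j\<in>S. v j = 0)"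
  shows "\<exists>B. (\<forall>a\<in>S. \<forall>b\<in>S. (\<Sum>k\<in>S. A a k * B k b) = (if a = b then 1 else 0))
           \<and> (\<forall>a\<in>S. \<forall>b\<in>S. (\<Sum>k\<in>S. B a k * A k b) = (if a = b then 1 else 0))"
proof -
  define n where "n = card S"
  obtain e where e: "bij_betw e {0..<n} S" using ex_bij_betw_nat_finite[OF fin] n_def by blast
  define f where "f = the_inv_into {0..<n} e"
  have fS: "x \<in> S \<Longrightarrow> f x < n" for x
    using e unfolding f_def by (metis atLeastLessThan_iff bij_betw_def the_inv_into_into order_refl)
  have efx: "x \<in> S \<Longrightarrow> e (f x) = x" for x
    using e unfolding f_def by (simp add: bij_betw_def f_the_inv_into_f)
  have fei: "i < n \<Longrightarrow> f (e i) = i" for i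
    using e unfolding f_def by (simp add: bij_betw_def the_inv_into_f_f)
  have eS: "i < n \<Longrightarrow> e i \<in> S" for i using e by (auto simp: bij_betw_def)
  have reidx: "(\<Sum>j\<in>S. g j) = (\<Sum>j=0..<n. g (e j))" for g :: "nat \<Rightarrow> complex"
    using sum.reindex_bij_betw[OF e, of g] by simp
  define Am :: "complex mat" where "Am = mat n n (\<lambda>(i,j). A (e i) (e j))"
  have Am: "Am \<in> carrier_mat n n" by (simp add: Am_def)
  have "det Am \<noteq> 0"
  proof
    assume "det Am = 0"
    then obtain v where v: "v \<in> carrier_vec n" "v \<noteq> 0\<^sub>v n" "Am *\<^sub>v v = 0\<^sub>v n"
      using det_0_iff_vec_prod_zero[OF Am] by auto
    define w where "w = (\<lambda>x. if x \<in> S then v $ f x else 0)"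
    have "\<forall>i\<in>S. (\<Sum>j\<in>S. A i j * w j) = 0"
    proof
      fix i assume i: "i \<in> S"
      have "(\<Sum>j\<in>S. A i j * w j) = (\<Sum>j=0..<n. A (e (f i)) (e j) * v $ j)"
        unfolding reidx using efx[OF i] eS fei by (intro sum.cong) (auto simp: w_def)
      also have "\<dots> = (Am *\<^sub>v v) $ (f i)"
        using v(1) fS[OF i] by (simp add: Am_def scalar_prod_def)
      also have "\<dots> = 0" using v(3) fS[OF i] by simp
      finally show "(\<Sum>j\<in>S. A i j * w j) = 0" .
    qed
    with inj have w0: "\<forall>j\<in>S. w j = 0" by blast
    have "v = 0\<^sub>v n"
    proof (rule eq_vecI)
      fix j assume "j < dim_vec (0\<^sub>v n :: complex vec)"
      then have j: "j < n" by simp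
      have "v $ j = w (e j)" using eS[OF j] fei[OF j] by (simp add: w_def)
      then show "v $ j = 0\<^sub>v n $ j" using w0 eS[OF j] j by simp
    qed (use v(1) in simp)
    with v(2) show False by simp
  qed
  from det_non_zero_imp_unit[OF Am this, of undefined]
  obtain Bm where Bm: "Bm \<in> carrier_mat n n" and BA: "Bm * Am = 1\<^sub>m n"
    unfolding Units_def ring_mat_def by auto
  have AB: "Am * Bm = 1\<^sub>m n" by (rule mat_mult_left_right_inverse[OF Bm Am BA])
  define B where "B = (\<lambda>x y. Bm $$ (f x, f y))"
  have prod1: "(\<Sum>k\<in>S. A a k * B k b) = (Am * Bm) $$ (f a, f b)" if "a \<in> S" "b \<in> S" for a b
  proof -
    have "(\<Sum>k\<in>S. A a k * B k b) = (\<Sum>j=0..<n. A (e (f a)) (e j) * Bm $$ (j, f b))"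
      unfolding reidx using efx[OF that(1)] fei by (intro sum.cong) (auto simp: B_def)
    also have "\<dots> = (Am * Bm) $$ (f a, f b)"
      using Bm fS that by (simp add: Am_def scalar_prod_def)
    finally show ?thesis .
  qed
  have prod2: "(\<Sum>k\<in>S. B a k * A k b) = (Bm * Am) $$ (f a, f b)" if "a \<in> S" "b \<in> S" for a b
  proof -
    have "(\<Sum>k\<in>S. B a k * A k b) = (\<Sum>j=0..<n. Bm $$ (f a, j) * A (e j) (e (f b)))"
      unfolding reidx using efx[OF that(2)] fei by (intro sum.cong) (auto simp: B_def)
    also have "\<dots> = (Bm * Am) $$ (f a, f b)"
      using Bm fS that by (simp add: Am_def scalar_prod_def)
    finally show ?thesis .
  qed
  have feq: "a \<in> S \<Longrightarrow> b \<in> S \<Longrightarrow> (f a = f b) = (a = b)" for a b using efx by metis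
  show ?thesis
    by (rule exI[of _ B]) (auto simp: prod1 prod2 AB BA fS feq)
qed

lemma quad_im:
  fixes S :: "nat set" and Hr :: "nat \<Rightarrow> nat \<Rightarrow> real"
  assumes fin: "finite S" and sym: "\<forall>a\<in>S. \<forall>b\<in>S. Hr a b = Hr b a"
  shows "Im (\<Sum>c\<in>S. cnj (w c) * (\<Sum>a\<in>S. (complex_of_real (Hr c a) - (if c = a then z else 0)) * w a))
         = - Im z * (\<Sum>c\<in>S. (cmod (w c))\<^sup>2)"
proof -
  define P where "P = (\<Sum>c\<in>S. \<Sum>a\<in>S. cnj (w c) * complex_of_real (Hr c a) * w a)"
  have split: "(\<Sum>c\<in>S. cnj (w c) * (\<Sum>a\<in>S. (complex_of_real (Hr c a) - (if c = a then z else 0)) * w a))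
      = P - z * (\<Sum>c\<in>S. cnj (w c) * w c)"
  proof -
    have "\<And>c. c \<in> S \<Longrightarrow> cnj (w c) * (\<Sum>a\<in>S. (complex_of_real (Hr c a) - (if c = a then z else 0)) * w a)
       = (\<Sum>a\<in>S. cnj (w c) * complex_of_real (Hr c a) * w a) - z * (cnj (w c) * w c)"
    proof -
      fix c assume c: "c \<in> S"
      have "(\<Sum>a\<in>S. (complex_of_real (Hr c a) - (if c = a then z else 0)) * w a)
          = (\<Sum>a\<in>S. complex_of_real (Hr c a) * w a) - (\<Sum>a\<in>S. (if c = a then z * w a else 0))"
        unfolding sum_subtractf[symmetric] by (intro sum.cong) (auto simp: algebra_simps)
      also have "(\<Sum>a\<in>S. (if c = a then z * w a else 0)) = z * w c" using fin c by simp
      finally have eq: "(\<Sum>a\<in>S. (complex_of_real (Hr c a) - (if c = a then z else 0)) * w a)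
          = (\<Sum>a\<in>S. complex_of_real (Hr c a) * w a) - z * w c" .
      have eq2: "(\<Sum>a\<in>S. cnj (w c) * complex_of_real (Hr c a) * w a) = cnj (w c) * (\<Sum>a\<in>S. complex_of_real (Hr c a) * w a)"
        by (simp add: sum_distrib_left mult.assoc)
      show "cnj (w c) * (\<Sum>a\<in>S. (complex_of_real (Hr c a) - (if c = a then z else 0)) * w a)
       = (\<Sum>a\<in>S. cnj (w c) * complex_of_real (Hr c a) * w a) - z * (cnj (w c) * w c)"
        unfolding eq eq2 by (metis (no_types) mult.left_commute right_diff_distrib)
    qed
    then show ?thesis
      by (simp add: P_def sum_subtractf sum_distrib_left cong: sum.cong)
  qed
  have "cnj P = (\<Sum>c\<in>S. \<Sum>a\<in>S. w c * complex_of_real (Hr c a) * cnj (w a))"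
    by (simp add: P_def)
  also have "\<dots> = (\<Sum>a\<in>S. \<Sum>c\<in>S. w c * complex_of_real (Hr c a) * cnj (w a))"
    by (rule sum.swap)
  also have "\<dots> = P" unfolding P_def
    using sym by (intro sum.cong refl) (auto simp: mult.commute mult.left_commute)
  finally have "Im P = 0" by (metis cnj.sel(2) neg_equal_zero)
  moreover have "(\<Sum>c\<in>S. cnj (w c) * w c) = complex_of_real (\<Sum>c\<in>S. (cmod (w c))\<^sup>2)"
    unfolding of_real_sum by (rule sum.cong[OF refl]) (simp only: o_def complex_norm_square mult.commute)
  ultimately show ?thesis unfolding split by simp
qed

lemma quad_zero:
  fixes S :: "nat set" and Hr :: "nat \<Rightarrow> nat \<Rightarrow> real"
  assumes fin: "finite S" and sym: "\<forall>a\<in>S. \<forall>b\<in>S. Hr a b = Hr b a" and z: "Im z > 0"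
    and q: "(\<Sum>c\<in>S. cnj (w c) * (\<Sum>a\<in>S. (complex_of_real (Hr c a) - (if c = a then z else 0)) * w a)) = 0"
  shows "\<forall>c\<in>S. w c = 0"
proof -
  have "- Im z * (\<Sum>c\<in>S. (cmod (w c))\<^sup>2) = 0" using quad_im[OF fin sym, of w z] q by simp
  with z have "(\<Sum>c\<in>S. (cmod (w c))\<^sup>2) = 0" by simp
  then have "\<forall>c\<in>S. (cmod (w c))\<^sup>2 = 0" using fin by (subst (asm) sum_nonneg_eq_0_iff) auto
  then show ?thesis by simp
qed

definition Mz :: "(nat \<Rightarrow> nat \<Rightarrow> real) \<Rightarrow> complex \<Rightarrow> nat set \<Rightarrow> nat \<Rightarrow> nat \<Rightarrow> complex" where
  "Mz H z J a b = complex_of_real (minor H J a b) - (if a = b then z else 0)"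

lemma resolv_Mz: "resolv N H z J = minv {1..N} (Mz H z J)"
  unfolding resolv_def Mz_def by (rule refl)

lemma resolv_inv:
  assumes sym: "\<forall>a\<in>{1..N}. \<forall>b\<in>{1..N}. H a b = H b a" and z: "Im z > 0"
  shows "\<forall>a\<in>{1..N}. \<forall>b\<in>{1..N}. (\<Sum>k\<in>{1..N}. Mz H z J a k * resolv N H z J k b) = (if a = b then 1 else 0)"
    and "\<forall>a\<in>{1..N}. \<forall>b\<in>{1..N}. (\<Sum>k\<in>{1..N}. resolv N H z J a k * Mz H z J k b) = (if a = b then 1 else 0)"
proof -
  let ?S = "{1..N::nat}"
  have symJ: "\<forall>a\<in>?S. \<forall>b\<in>?S. minor H J a b = minor H J b a"
    using sym by (auto simp: minor_def)
  have inj: "\<forall>v. (\<forall>i\<in>?S. (\<Sum>j\<in>?S. Mz H z J i j * v j) = 0) \<longrightarrow> (\<forall>j\<in>?S. v j = 0)"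
  proof (intro allI impI)
    fix v assume h: "\<forall>i\<in>?S. (\<Sum>j\<in>?S. Mz H z J i j * v j) = 0"
    have "(\<Sum>c\<in>?S. cnj (v c) * (\<Sum>a\<in>?S. (complex_of_real (minor H J c a) - (if c = a then z else 0)) * v a)) = 0"
      using h by (simp add: Mz_def)
    then show "\<forall>j\<in>?S. v j = 0" using quad_zero[OF _ symJ z] by blast
  qed
  obtain B where AB: "\<forall>a\<in>?S. \<forall>b\<in>?S. (\<Sum>k\<in>?S. Mz H z J a k * B k b) = (if a = b then 1 else 0)"
      and BA: "\<forall>a\<in>?S. \<forall>b\<in>?S. (\<Sum>k\<in>?S. B a k * Mz H z J k b) = (if a = b then 1 else 0)"
    using inv_exists[OF _ inj] by blast
  have eq: "\<And>a b. a \<in> ?S \<Longrightarrow> b \<in> ?S \<Longrightarrow> resolv N H z J a b = B a b"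
    unfolding resolv_Mz using minv_eq[OF _ AB BA] by blast
  show "\<forall>a\<in>?S. \<forall>b\<in>?S. (\<Sum>k\<in>?S. Mz H z J a k * resolv N H z J k b) = (if a = b then 1 else 0)"
  proof (intro ballI)
    fix a b assume a: "a \<in> ?S" and b: "b \<in> ?S"
    have "(\<Sum>k\<in>?S. Mz H z J a k * resolv N H z J k b) = (\<Sum>k\<in>?S. Mz H z J a k * B k b)"
      using eq a b by (intro sum.cong) auto
    then show "(\<Sum>k\<in>?S. Mz H z J a k * resolv N H z J k b) = (if a = b then 1 else 0)" using AB a b by simp
  qed
  show "\<forall>a\<in>?S. \<forall>b\<in>?S. (\<Sum>k\<in>?S. resolv N H z J a k * Mz H z J k b) = (if a = b then 1 else 0)"
  proof (intro ballI)
    fix a b assume a: "a \<in> ?S" and b: "b \<in> ?S"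
    have "(\<Sum>k\<in>?S. resolv N H z J a k * Mz H z J k b) = (\<Sum>k\<in>?S. B a k * Mz H z J k b)"
      using eq a b by (intro sum.cong) auto
    then show "(\<Sum>k\<in>?S. resolv N H z J a k * Mz H z J k b) = (if a = b then 1 else 0)" using BA a b by simp
  qed
qed

lemma GII_inv:
  assumes sym: "\<forall>a\<in>{1..N}. \<forall>b\<in>{1..N}. H a b = H b a" and z: "Im z > 0"
    and I: "I \<subseteq> {1..N}"
  shows "\<forall>a\<in>I. \<forall>b\<in>I. (\<Sum>k\<in>I. resolv N H z {} a k * minv I (resolv N H z {}) k b) = (if a = b then 1 else 0)"
    and "\<forall>a\<in>I. \<forall>b\<in>I. (\<Sum>k\<in>I. minv I (resolv N H z {}) a k * resolv N H z {} k b) = (if a = b then 1 else 0)"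
proof -
  let ?S = "{1..N::nat}"
  let ?G = "resolv N H z {}"
  let ?M = "Mz H z {}"
  have finI: "finite I" using I finite_subset by blast
  have MG: "\<forall>a\<in>?S. \<forall>b\<in>?S. (\<Sum>k\<in>?S. ?M a k * ?G k b) = (if a = b then 1 else 0)"
    using resolv_inv(1)[OF sym z] .
  have symJ: "\<forall>a\<in>?S. \<forall>b\<in>?S. minor H {} a b = minor H {} b a"
    using sym by (auto simp: minor_def)
  have inj: "\<forall>u. (\<forall>i\<in>I. (\<Sum>j\<in>I. ?G i j * u j) = 0) \<longrightarrow> (\<forall>j\<in>I. u j = 0)"
  proof (intro allI impI)
    fix u assume h: "\<forall>i\<in>I. (\<Sum>j\<in>I. ?G i j * u j) = 0"
    define u' where "u' = (\<lambda>b. if b \<in> I then u b else 0)"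
    define w where "w = (\<lambda>a. \<Sum>b\<in>?S. ?G a b * u' b)"
    have wI: "w i = (\<Sum>j\<in>I. ?G i j * u j)" for i
    proof -
      have "w i = (\<Sum>b\<in>?S. if b \<in> I then ?G i b * u b else 0)"
        unfolding w_def u'_def by (intro sum.cong) auto
      also have "\<dots> = (\<Sum>b\<in>?S \<inter> I. ?G i b * u b)" by (simp add: sum.inter_restrict)
      also have "?S \<inter> I = I" using I by blast
      finally show ?thesis .
    qed
    have Mw: "(\<Sum>a\<in>?S. ?M c a * w a) = u' c" if c: "c \<in> ?S" for c
    proof -
      have "(\<Sum>a\<in>?S. ?M c a * w a) = (\<Sum>b\<in>?S. (\<Sum>a\<in>?S. ?M c a * ?G a b) * u' b)"
        unfolding w_def by (rule sum_assoc3[symmetric])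
      also have "\<dots> = (\<Sum>b\<in>?S. (if c = b then 1 else 0) * u' b)"
        using MG c by (intro sum.cong) auto
      also have "\<dots> = u' c" using sum_delta_l[OF _ c] by simp
      finally show ?thesis .
    qed
    have "(\<Sum>c\<in>?S. cnj (w c) * (\<Sum>a\<in>?S. (complex_of_real (minor H {} c a) - (if c = a then z else 0)) * w a)) = 0"
    proof -
      have "(\<Sum>c\<in>?S. cnj (w c) * (\<Sum>a\<in>?S. (complex_of_real (minor H {} c a) - (if c = a then z else 0)) * w a))
          = (\<Sum>c\<in>?S. cnj (w c) * u' c)"
        using Mw by (intro sum.cong) (auto simp: Mz_def)
      also have "\<dots> = 0"
      proof (intro sum.neutral ballI)
        fix c assume c: "c \<in> ?S"
        show "cnj (w c) * u' c = 0"
        proof (cases "c \<in> I")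
          case True then have "w c = 0" using wI h by simp
          then show ?thesis by simp
        next
          case False then show ?thesis by (simp add: u'_def)
        qed
      qed
      finally show ?thesis .
    qed
    then have w0: "\<forall>c\<in>?S. w c = 0" using quad_zero[OF _ symJ z] by blast
    show "\<forall>j\<in>I. u j = 0"
    proof
      fix j assume j: "j \<in> I"
      then have jS: "j \<in> ?S" using I by blast
      have "u' j = (\<Sum>a\<in>?S. ?M j a * w a)" using Mw[OF jS] by simp
      also have "\<dots> = 0" using w0 by simp
      finally show "u j = 0" using j by (simp add: u'_def)
    qed
  qed
  obtain B where AB: "\<forall>a\<in>I. \<forall>b\<in>I. (\<Sum>k\<in>I. ?G a k * B k b) = (if a = b then 1 else 0)"
      and BA: "\<forall>a\<in>I. \<forall>b\<in>I. (\<Sum>k\<in>I. B a k * ?G k b) = (if a = b then 1 else 0)"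
    using inv_exists[OF finI inj] by blast
  have eq: "\<And>a b. a \<in> I \<Longrightarrow> b \<in> I \<Longrightarrow> minv I ?G a b = B a b"
    using minv_eq[OF finI AB BA] by blast
  show "\<forall>a\<in>I. \<forall>b\<in>I. (\<Sum>k\<in>I. ?G a k * minv I ?G k b) = (if a = b then 1 else 0)"
  proof (intro ballI)
    fix a b assume a: "a \<in> I" and b: "b \<in> I"
    have "(\<Sum>k\<in>I. ?G a k * minv I ?G k b) = (\<Sum>k\<in>I. ?G a k * B k b)"
      using eq a b by (intro sum.cong) auto
    then show "(\<Sum>k\<in>I. ?G a k * minv I ?G k b) = (if a = b then 1 else 0)" using AB a b by simp
  qed
  show "\<forall>a\<in>I. \<forall>b\<in>I. (\<Sum>k\<in>I. minv I ?G a k * ?G k b) = (if a = b then 1 else 0)"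
  proof (intro ballI)
    fix a b assume a: "a \<in> I" and b: "b \<in> I"
    have "(\<Sum>k\<in>I. minv I ?G a k * ?G k b) = (\<Sum>k\<in>I. B a k * ?G k b)"
      using eq a b by (intro sum.cong) auto
    then show "(\<Sum>k\<in>I. minv I ?G a k * ?G k b) = (if a = b then 1 else 0)" using BA a b by simp
  qed
qed

lemma swap1:
  "(\<Sum>a\<in>T. m a * (\<Sum>x\<in>I. \<Sum>y\<in>I. g a x * Y x y * (h y::complex)))
   = (\<Sum>x\<in>I. \<Sum>y\<in>I. (\<Sum>a\<in>T. m a * g a x) * Y x y * h y)"
proof -
  have "(\<Sum>a\<in>T. m a * (\<Sum>x\<in>I. \<Sum>y\<in>I. g a x * Y x y * h y))
      = (\<Sum>a\<in>T. \<Sum>x\<in>I. \<Sum>y\<in>I. m a * g a x * Y x y * h y)"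
    by (simp add: sum_distrib_left mult.assoc)
  also have "\<dots> = (\<Sum>x\<in>I. \<Sum>a\<in>T. \<Sum>y\<in>I. m a * g a x * Y x y * h y)" by (rule sum.swap)
  also have "\<dots> = (\<Sum>x\<in>I. \<Sum>y\<in>I. \<Sum>a\<in>T. m a * g a x * Y x y * h y)"
    by (intro sum.cong refl sum.swap)
  also have "\<dots> = (\<Sum>x\<in>I. \<Sum>y\<in>I. (\<Sum>a\<in>T. m a * g a x) * Y x y * h y)"
    by (simp add: sum_distrib_right)
  finally show ?thesis .
qed

lemma swap2:
  "(\<Sum>x\<in>I. \<Sum>y\<in>I. (\<Sum>a\<in>T. m a * g a x) * Y x y * (h y::complex))
   = (\<Sum>a\<in>T. m a * (\<Sum>y\<in>I. (\<Sum>x\<in>I. g a x * Y x y) * h y))"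
proof -
  have "(\<Sum>x\<in>I. \<Sum>y\<in>I. (\<Sum>a\<in>T. m a * g a x) * Y x y * h y)
      = (\<Sum>x\<in>I. \<Sum>y\<in>I. \<Sum>a\<in>T. m a * g a x * Y x y * h y)"
    by (simp add: sum_distrib_right)
  also have "\<dots> = (\<Sum>x\<in>I. \<Sum>a\<in>T. \<Sum>y\<in>I. m a * g a x * Y x y * h y)"
    by (intro sum.cong refl sum.swap)
  also have "\<dots> = (\<Sum>a\<in>T. \<Sum>x\<in>I. \<Sum>y\<in>I. m a * g a x * Y x y * h y)" by (rule sum.swap)
  also have "\<dots> = (\<Sum>a\<in>T. \<Sum>y\<in>I. \<Sum>x\<in>I. m a * g a x * Y x y * h y)"
    by (intro sum.cong refl sum.swap)
  also have "\<dots> = (\<Sum>a\<in>T. m a * (\<Sum>y\<in>I. (\<Sum>x\<in>I. g a x * Y x y) * h y))"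
    by (simp add: sum_distrib_left sum_distrib_right mult.assoc)
  finally show ?thesis .
qed

lemma schur:
  assumes sym: "\<forall>a\<in>{1..N}. \<forall>b\<in>{1..N}. H a b = H b a" and z: "Im z > 0"
    and I: "I \<subseteq> {1..N}" and k: "k \<in> {1..N}" "k \<notin> I" and l: "l \<in> {1..N}" "l \<notin> I"
  shows "resolv N H z I k l = resolv N H z {} k l
     - (\<Sum>x\<in>I. \<Sum>y\<in>I. resolv N H z {} k x * minv I (resolv N H z {}) x y * resolv N H z {} y l)"
proof -
  let ?S = "{1..N::nat}"
  define T where "T = ?S - I"
  define G where "G = resolv N H z {}"
  define Y where "Y = minv I G"
  define M where "M = Mz H z {}"
  define MI where "MI = Mz H z I"
  define R where "R = (\<lambda>a d. \<Sum>x\<in>I. \<Sum>y\<in>I. G a x * Y x y * G y d)"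
  define B' where "B' = (\<lambda>a b. if a \<in> T \<and> b \<in> T then G a b - R a b else if a = b then - 1 / z else 0)"
  have finS: "finite ?S" by simp
  have finI: "finite I" using I finite_subset by blast
  have z0: "z \<noteq> 0" using z by auto
  have MG: "\<forall>a\<in>?S. \<forall>b\<in>?S. (\<Sum>k\<in>?S. M a k * G k b) = (if a = b then 1 else 0)"
    unfolding M_def G_def using resolv_inv(1)[OF sym z] .
  have GY: "\<forall>a\<in>I. \<forall>b\<in>I. (\<Sum>k\<in>I. G a k * Y k b) = (if a = b then 1 else 0)"
    unfolding Y_def G_def using GII_inv(1)[OF sym z I] .
  have GIMI: "\<forall>a\<in>?S. \<forall>b\<in>?S. (\<Sum>k\<in>?S. resolv N H z I a k * MI k b) = (if a = b then 1 else 0)"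
    unfolding MI_def using resolv_inv(2)[OF sym z] .
  have split: "(\<Sum>a\<in>?S. f a) = (\<Sum>a\<in>T. f a) + (\<Sum>a\<in>I. f a)" for f :: "nat \<Rightarrow> complex"
    unfolding T_def using sum.subset_diff[OF I finS] .
  have MIB: "\<forall>c\<in>?S. \<forall>d\<in>?S. (\<Sum>a\<in>?S. MI c a * B' a d) = (if c = d then 1 else 0)"
  proof (intro ballI)
    fix c d assume c: "c \<in> ?S" and d: "d \<in> ?S"
    show "(\<Sum>a\<in>?S. MI c a * B' a d) = (if c = d then 1 else 0)"
    proof (cases "c \<in> I")
      case True
      have "(\<Sum>a\<in>?S. MI c a * B' a d) = (\<Sum>a\<in>?S. if c = a then - z * B' a d else 0)"
        using True by (intro sum.cong) (auto simp: MI_def Mz_def minor_def)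
      also have "\<dots> = - z * B' c d" using c by simp
      also have "\<dots> = (if c = d then 1 else 0)" using True z0 by (auto simp: B'_def T_def)
      finally show ?thesis .
    next
      case False
      then have cT: "c \<in> T" using c by (simp add: T_def)
      have "(\<Sum>a\<in>?S. MI c a * B' a d) = (\<Sum>a\<in>T. MI c a * B' a d) + (\<Sum>a\<in>I. MI c a * B' a d)"
        by (rule split)
      also have "(\<Sum>a\<in>I. MI c a * B' a d) = 0"
        using False by (intro sum.neutral) (auto simp: MI_def Mz_def minor_def)
      also have "(\<Sum>a\<in>T. MI c a * B' a d) = (\<Sum>a\<in>T. M c a * B' a d)"
        using False by (intro sum.cong) (auto simp: MI_def M_def Mz_def minor_def T_def)
      finally have eq1: "(\<Sum>a\<in>?S. MI c a * B' a d) = (\<Sum>a\<in>T. M c a * B' a d)" by simp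
      show ?thesis
      proof (cases "d \<in> I")
        case True
        have "(\<Sum>a\<in>T. M c a * B' a d) = 0"
          using True by (intro sum.neutral) (auto simp: B'_def T_def)
        then show ?thesis using eq1 True False by auto
      next
        case dI: False
        then have dT: "d \<in> T" using d by (simp add: T_def)
        have F1: "(\<Sum>a\<in>T. M c a * G a b) = (if c = b then 1 else 0) - (\<Sum>a\<in>I. M c a * G a b)"
          if b: "b \<in> ?S" for b
          using split[of "\<lambda>a. M c a * G a b"] MG c b by simp
        have "(\<Sum>a\<in>T. M c a * B' a d) = (\<Sum>a\<in>T. M c a * G a d) - (\<Sum>a\<in>T. M c a * R a d)"
          using dT by (simp add: B'_def right_diff_distrib sum_subtractf cong: sum.cong)
        also have "(\<Sum>a\<in>T. M c a * R a d) = (\<Sum>x\<in>I. \<Sum>y\<in>I. (\<Sum>a\<in>T. M c a * G a x) * Y x y * G y d)"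
          unfolding R_def by (rule swap1)
        also have "\<dots> = (\<Sum>x\<in>I. \<Sum>y\<in>I. (\<Sum>a\<in>I. (- M c a) * G a x) * Y x y * G y d)"
        proof (intro sum.cong refl)
          fix x y assume x: "x \<in> I" and "y \<in> I"
          have "c \<noteq> x" using x False by auto
          then show "(\<Sum>a\<in>T. M c a * G a x) * Y x y * G y d = (\<Sum>a\<in>I. (- M c a) * G a x) * Y x y * G y d"
            using F1[of x] x I by (auto simp: sum_negf)
        qed
        also have "\<dots> = (\<Sum>a\<in>I. (- M c a) * (\<Sum>y\<in>I. (\<Sum>x\<in>I. G a x * Y x y) * G y d))"
          by (rule swap2)
        also have "\<dots> = (\<Sum>a\<in>I. (- M c a) * (\<Sum>y\<in>I. (if a = y then 1 else 0) * G y d))"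
          using GY by (intro sum.cong refl arg_cong2[where f="(*)"]) auto
        also have "\<dots> = (\<Sum>a\<in>I. (- M c a) * G a d)"
          using sum_delta_l[OF finI] by (intro sum.cong refl) auto
        finally have "(\<Sum>a\<in>T. M c a * B' a d)
            = (\<Sum>a\<in>T. M c a * G a d) - (\<Sum>a\<in>I. (- M c a) * G a d)" .
        also have "\<dots> = (if c = d then 1 else 0)"
          using F1[OF d] by (simp add: sum_negf)
        finally show ?thesis using eq1 by simp
      qed
    qed
  qed
  have "resolv N H z I k l = B' k l"
    using left_inv_apply[OF finS GIMI MIB] k l by blast
  then show ?thesis using k l by (simp add: B'_def T_def R_def G_def Y_def)
qed

lemma cs_sqrt:
  fixes a b :: "nat \<Rightarrow> real"
  shows "(\<Sum>i\<in>I. a i * b i) \<le> sqrt (\<Sum>i\<in>I. (a i)\<^sup>2) * sqrt (\<Sum>i\<in>I. (b i)\<^sup>2)"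
proof -
  have "(\<Sum>i\<in>I. a i * b i) \<le> sqrt ((\<Sum>i\<in>I. a i * b i)\<^sup>2)" by simp
  also have "\<dots> \<le> sqrt ((\<Sum>i\<in>I. (a i)\<^sup>2) * (\<Sum>i\<in>I. (b i)\<^sup>2))"
    by (rule real_sqrt_le_mono[OF Cauchy_Schwarz_ineq_sum])
  also have "\<dots> = sqrt (\<Sum>i\<in>I. (a i)\<^sup>2) * sqrt (\<Sum>i\<in>I. (b i)\<^sup>2)" by (simp add: real_sqrt_mult)
  finally show ?thesis .
qed

lemma opnorm_set_bdd:
  fixes I :: "nat set"
  assumes fin: "finite I"
  shows "bdd_above (insert 0 {sqrt (\<Sum>i\<in>I. (cmod (\<Sum>j\<in>I. A i j * v j))\<^sup>2) | v.
                     (\<Sum>j\<in>I. (cmod (v j))\<^sup>2) = 1})"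
proof -
  define C where "C = sqrt (\<Sum>i\<in>I. (\<Sum>j\<in>I. cmod (A i j))\<^sup>2)"
  have "x \<le> C" if x: "x \<in> insert 0 {sqrt (\<Sum>i\<in>I. (cmod (\<Sum>j\<in>I. A i j * v j))\<^sup>2) | v.
                     (\<Sum>j\<in>I. (cmod (v j))\<^sup>2) = 1}" for x
  proof -
    { fix v :: "nat \<Rightarrow> complex" assume v: "(\<Sum>j\<in>I. (cmod (v j))\<^sup>2) = 1"
      have vj: "cmod (v j) \<le> 1" if j: "j \<in> I" for j
      proof -
        have "(cmod (v j))\<^sup>2 \<le> (\<Sum>j\<in>I. (cmod (v j))\<^sup>2)"
          by (rule member_le_sum[OF j _ fin]) simp
        then have "(cmod (v j))\<^sup>2 \<le> 1\<^sup>2" using v by simp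
        then show ?thesis by (rule power2_le_imp_le) simp
      qed
      have "cmod (\<Sum>j\<in>I. A i j * v j) \<le> (\<Sum>j\<in>I. cmod (A i j))" for i
      proof -
        have "cmod (\<Sum>j\<in>I. A i j * v j) \<le> (\<Sum>j\<in>I. cmod (A i j * v j))" by (rule norm_sum)
        also have "\<dots> \<le> (\<Sum>j\<in>I. cmod (A i j))"
          using vj by (intro sum_mono) (auto simp: norm_mult intro: mult_left_le)
        finally show ?thesis .
      qed
      then have "(\<Sum>i\<in>I. (cmod (\<Sum>j\<in>I. A i j * v j))\<^sup>2) \<le> (\<Sum>i\<in>I. (\<Sum>j\<in>I. cmod (A i j))\<^sup>2)"
        by (intro sum_mono power_mono) auto
      then have "sqrt (\<Sum>i\<in>I. (cmod (\<Sum>j\<in>I. A i j * v j))\<^sup>2) \<le> C"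
        unfolding C_def by (rule real_sqrt_le_mono) }
    moreover have "0 \<le> C" unfolding C_def by (simp add: sum_nonneg)
    ultimately show ?thesis using x by blast
  qed
  then show ?thesis by (rule bdd_aboveI)
qed

lemma opnorm_nonneg: "finite (I::nat set) \<Longrightarrow> 0 \<le> opnorm I A"
  unfolding opnorm_def by (rule cSup_upper[OF _ opnorm_set_bdd]) auto

lemma opnorm_apply:
  fixes I :: "nat set"
  assumes fin: "finite I"
  shows "sqrt (\<Sum>i\<in>I. (cmod (\<Sum>j\<in>I. A i j * v j))\<^sup>2) \<le> opnorm I A * sqrt (\<Sum>j\<in>I. (cmod (v j))\<^sup>2)"
proof (cases "(\<Sum>j\<in>I. (cmod (v j))\<^sup>2) = 0")
  case True
  then have "\<forall>j\<in>I. v j = 0" using fin by (subst (asm) sum_nonneg_eq_0_iff) auto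
  then show ?thesis using True by simp
next
  case False
  define s where "s = sqrt (\<Sum>j\<in>I. (cmod (v j))\<^sup>2)"
  have s0: "s > 0" using False unfolding s_def by (simp add: sum_nonneg order_le_neq_trans)
  define v' where "v' = (\<lambda>j. v j / complex_of_real s)"
  have "(\<Sum>j\<in>I. (cmod (v' j))\<^sup>2) = (\<Sum>j\<in>I. (cmod (v j))\<^sup>2) / s\<^sup>2"
    using s0 by (simp add: v'_def norm_divide power_divide sum_divide_distrib)
  also have "\<dots> = 1" using s0 False unfolding s_def by (simp add: sum_nonneg)
  finally have v'1: "(\<Sum>j\<in>I. (cmod (v' j))\<^sup>2) = 1" .
  have le: "sqrt (\<Sum>i\<in>I. (cmod (\<Sum>j\<in>I. A i j * v' j))\<^sup>2) \<le> opnorm I A"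
    unfolding opnorm_def by (rule cSup_upper[OF _ opnorm_set_bdd[OF fin]]) (use v'1 in blast)
  have hc: "cmod (\<Sum>j\<in>I. A i j * v j) = s * cmod (\<Sum>j\<in>I. A i j * v' j)" for i
  proof -
    have "(\<Sum>j\<in>I. A i j * v j) = complex_of_real s * (\<Sum>j\<in>I. A i j * v' j)"
      unfolding sum_distrib_left v'_def using s0 by (intro sum.cong) auto
    then show ?thesis using s0 by (simp add: norm_mult)
  qed
  have "(\<Sum>i\<in>I. (cmod (\<Sum>j\<in>I. A i j * v j))\<^sup>2) = s\<^sup>2 * (\<Sum>i\<in>I. (cmod (\<Sum>j\<in>I. A i j * v' j))\<^sup>2)"
    by (simp only: hc power_mult_distrib sum_distrib_left)
  then have "sqrt (\<Sum>i\<in>I. (cmod (\<Sum>j\<in>I. A i j * v j))\<^sup>2) = s * sqrt (\<Sum>i\<in>I. (cmod (\<Sum>j\<in>I. A i j * v' j))\<^sup>2)"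
    using s0 by (simp add: real_sqrt_mult)
  also have "\<dots> \<le> s * opnorm I A" using le s0 by simp
  finally show ?thesis by (simp add: s_def mult.commute)
qed

lemma bilin_bound:
  fixes I :: "nat set"
  assumes fin: "finite I"
  shows "cmod (\<Sum>x\<in>I. \<Sum>y\<in>I. u x * Y x y * v y)
     \<le> sqrt (\<Sum>x\<in>I. (cmod (u x))\<^sup>2) * opnorm I Y * sqrt (\<Sum>y\<in>I. (cmod (v y))\<^sup>2)"
proof -
  have "(\<Sum>x\<in>I. \<Sum>y\<in>I. u x * Y x y * v y) = (\<Sum>x\<in>I. u x * (\<Sum>y\<in>I. Y x y * v y))"
    by (simp add: sum_distrib_left mult.assoc)
  then have "cmod (\<Sum>x\<in>I. \<Sum>y\<in>I. u x * Y x y * v y) \<le> (\<Sum>x\<in>I. cmod (u x) * cmod (\<Sum>y\<in>I. Y x y * v y))"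
    by (metis (no_types, lifting) norm_mult norm_sum sum.cong)
  also have "\<dots> \<le> sqrt (\<Sum>x\<in>I. (cmod (u x))\<^sup>2) * sqrt (\<Sum>x\<in>I. (cmod (\<Sum>y\<in>I. Y x y * v y))\<^sup>2)"
    by (rule cs_sqrt)
  also have "\<dots> \<le> sqrt (\<Sum>x\<in>I. (cmod (u x))\<^sup>2) * (opnorm I Y * sqrt (\<Sum>y\<in>I. (cmod (v y))\<^sup>2))"
    by (intro mult_left_mono opnorm_apply[OF fin]) (simp add: sum_nonneg)
  finally show ?thesis by (simp add: mult.assoc)
qed

theorem corollary3p2:
  fixes N K :: nat and H :: "nat \<Rightarrow> nat \<Rightarrow> real" and z :: complex
    and i k l :: nat and I :: "nat set"
  assumes "K \<ge> 1"
    and "\<forall>a\<in>{1..N}. \<forall>b\<in>{1..N}. H a b = H b a"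
    and "Im z > 0"
    and "i \<in> {1..N}"
    and "I \<subseteq> window N K i"
    and "k \<in> {1..N}" and "l \<in> {1..N}" and "k \<notin> I" and "l \<notin> I"
  shows "cmod (resolv N H z I k l) \<le> 8 * (real K)\<^sup>2 * (Gamma_ctrl N H z)\<^sup>2 * gamma_ctrl N K H z"
proof -
  note K = assms(1) and sym = assms(2) and z = assms(3) and iS = assms(4) and Iw = assms(5)
    and k = assms(6,8) and l = assms(7,9)
  let ?S = "{1..N::nat}"
  define G where "G = resolv N H z {}"
  define Y where "Y = minv I G"
  define g where "g = Gamma_ctrl N H z"
  define gm where "gm = gamma_ctrl N K H z"
  have wS: "window N K i \<subseteq> ?S" by (auto simp: window_def)
  have IS: "I \<subseteq> ?S" using Iw wS by blast
  have finI: "finite I" using IS finite_subset by blast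
  have cardI: "real (card I) \<le> 4 * real K + 1"
  proof -
    have "window N K i \<subseteq> {i - 2 * K .. i + 2 * K}" by (auto simp: window_def)
    then have "I \<subseteq> {i - 2 * K .. i + 2 * K}" using Iw by blast
    then have "card I \<le> card {i - 2 * K .. i + 2 * K}" by (intro card_mono) auto
    also have "\<dots> = Suc (i + 2 * K) - (i - 2 * K)" by simp
    also have "\<dots> \<le> 4 * K + 1" by simp
    finally show ?thesis by linarith
  qed
  have g1: "1 \<le> g" by (simp add: g_def Gamma_ctrl_def)
  have gG: "cmod (G a b) \<le> g" if "a \<in> ?S" "b \<in> ?S" for a b
  proof -
    have fin: "finite {cmod (resolv N H z {} i j) | i j. i \<in> ?S \<and> j \<in> ?S}"
      by (rule finite_image_set2) auto
    have "cmod (G a b) \<le> Max {cmod (resolv N H z {} i j) | i j. i \<in> ?S \<and> j \<in> ?S}"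
      using that unfolding G_def by (intro Max_ge[OF fin]) blast
    then show ?thesis unfolding g_def Gamma_ctrl_def by linarith
  qed
  have gm1: "1 \<le> gm" by (simp add: gm_def gamma_ctrl_def)
  have opY: "opnorm I Y \<le> gm"
  proof -
    let ?A = "{opnorm I' (minv I' (resolv N H z J)) | i I' J.
       i \<in> ?S \<and> I' \<subseteq> window N K i \<and> J \<subseteq> window N K i \<and> I' \<inter> J = {}}"
    have "?A \<subseteq> (\<lambda>(I', J). opnorm I' (minv I' (resolv N H z J))) ` (Pow ?S \<times> Pow ?S)"
    proof
      fix x assume "x \<in> ?A"
      then obtain i' I' J where x: "x = opnorm I' (minv I' (resolv N H z J))"
        and h: "I' \<subseteq> window N K i'" "J \<subseteq> window N K i'" by blast
      have "window N K i' \<subseteq> ?S" by (auto simp: window_def)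
      then have "(I', J) \<in> Pow ?S \<times> Pow ?S" using h by blast
      then show "x \<in> (\<lambda>(I', J). opnorm I' (minv I' (resolv N H z J))) ` (Pow ?S \<times> Pow ?S)"
        unfolding x by (rule rev_image_eqI) simp
    qed
    then have "finite ?A" by (rule finite_subset) simp
    moreover have "opnorm I Y \<in> ?A" unfolding Y_def G_def using iS Iw by blast
    ultimately have "opnorm I Y \<le> Sup ?A" by (intro cSup_upper) auto
    then show ?thesis unfolding gm_def gamma_ctrl_def by linarith
  qed
  have op0: "0 \<le> opnorm I Y" by (rule opnorm_nonneg[OF finI])
  have sch: "resolv N H z I k l = G k l - (\<Sum>x\<in>I. \<Sum>y\<in>I. G k x * Y x y * G y l)"
    unfolding G_def Y_def using schur[OF sym z IS k l] .
  have su1: "(\<Sum>x\<in>I. (cmod (G k x))\<^sup>2) \<le> real (card I) * g\<^sup>2"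
    using sum_bounded_above[of I "\<lambda>x. (cmod (G k x))\<^sup>2" "g\<^sup>2"] gG k IS
    by (simp add: power_mono subset_iff)
  have su2: "(\<Sum>y\<in>I. (cmod (G y l))\<^sup>2) \<le> real (card I) * g\<^sup>2"
    using sum_bounded_above[of I "\<lambda>y. (cmod (G y l))\<^sup>2" "g\<^sup>2"] gG l IS
    by (simp add: power_mono subset_iff)
  have sq1: "sqrt (\<Sum>x\<in>I. (cmod (G k x))\<^sup>2) \<le> sqrt (real (card I)) * g"
    using real_sqrt_le_mono[OF su1] g1 by (simp add: real_sqrt_mult)
  have sq2: "sqrt (\<Sum>y\<in>I. (cmod (G y l))\<^sup>2) \<le> sqrt (real (card I)) * g"
    using real_sqrt_le_mono[OF su2] g1 by (simp add: real_sqrt_mult)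
  have X: "cmod (\<Sum>x\<in>I. \<Sum>y\<in>I. G k x * Y x y * G y l) \<le> real (card I) * g\<^sup>2 * gm"
  proof -
    have "cmod (\<Sum>x\<in>I. \<Sum>y\<in>I. G k x * Y x y * G y l)
        \<le> sqrt (\<Sum>x\<in>I. (cmod (G k x))\<^sup>2) * opnorm I Y * sqrt (\<Sum>y\<in>I. (cmod (G y l))\<^sup>2)"
      by (rule bilin_bound[OF finI])
    also have "\<dots> \<le> (sqrt (real (card I)) * g) * gm * (sqrt (real (card I)) * g)"
      using sq1 sq2 opY op0 g1 by (intro mult_mono) (auto simp: sum_nonneg)
    also have "\<dots> = real (card I) * g\<^sup>2 * gm"
      by (simp add: power2_eq_square algebra_simps)
    finally show ?thesis .
  qed
  have "cmod (resolv N H z I k l) \<le> cmod (G k l) + cmod (\<Sum>x\<in>I. \<Sum>y\<in>I. G k x * Y x y * G y l)"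
    unfolding sch by (rule norm_triangle_ineq4)
  also have "\<dots> \<le> g + real (card I) * g\<^sup>2 * gm" using gG[OF k(1) l(1)] X by linarith
  also have "\<dots> \<le> (4 * real K + 2) * g\<^sup>2 * gm"
  proof -
    have "1 * 1 \<le> g * gm" using g1 gm1 by (intro mult_mono) auto
    then have "g * 1 \<le> g * (g * gm)" using g1 by (intro mult_left_mono) auto
    then have "g \<le> g\<^sup>2 * gm" by (simp add: power2_eq_square mult.assoc)
    moreover have "real (card I) * (g\<^sup>2 * gm) \<le> (4 * real K + 1) * (g\<^sup>2 * gm)"
      using cardI g1 gm1 by (intro mult_right_mono) auto
    ultimately show ?thesis by (simp add: algebra_simps)
  qed
  also have "\<dots> \<le> 8 * (real K)\<^sup>2 * g\<^sup>2 * gm"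
  proof -
    have K1: "1 \<le> real K" using K by simp
    then have "real K * 1 \<le> real K * real K" by (intro mult_left_mono) auto
    then have "4 * real K + 2 \<le> 8 * (real K)\<^sup>2" using K1 unfolding power2_eq_square by linarith
    then show ?thesis using g1 gm1 by (intro mult_right_mono) auto
  qed
  finally show ?thesis unfolding g_def gm_def .
qed

end
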